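(* Let $f(X)=\sum_{i=0}^{h-1}f_iX^{q^i}$ be an invertible $\mathbb F_q$-linearised polynomial over $\mathbb F_{q^h}$ with exactly two nonzero coefficients, and suppose that $f$ is not semi-linear over any subfield $\mathbb F_{q^s}$ of $\mathbb F_{q^h}$ with $\mathbb F_{q^s}\supsetneq\mathbb F_q$. Then all coefficients of $f^{-1}(X)=\sum_{i=0}^{h-1}\overline f_iX^{q^i}$ are nonzero.
   Context: An $\mathbb F_q$-linearised polynomial over $\mathbb F_{q^h}$ is $\sum_{l=0}^{h-1}a_lX^{q^l}$ with $a_l\in\mathbb F_{q^h}$, viewed as a map of $\mathbb F_{q^h}$; invertible means bijective, and its inverse map is again such a polynomial. For a subfield $K$ of $\mathbb F_{q^h}$, $f$ is $K$-semi-linear if there is a field automorphism $\sigma$ of $\mathbb F_{q^h}$ with $f(\alpha x)=\alpha^\sigma f(x)$ for all $\alpha\in K$, $x\in\mathbb F_{q^h}$. *)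

theory Defs
  imports "HOL-Computational_Algebra.Primes"
begin

definition lin_poly :: "nat \<Rightarrow> nat \<Rightarrow> (nat \<Rightarrow> 'a::field) \<Rightarrow> 'a \<Rightarrow> 'a" where
  "lin_poly q h a x = (\<Sum>l<h. a l * x ^ (q ^ l))"

definition Fq :: "nat \<Rightarrow> 'a::field set" where
  "Fq q = {x. x ^ q = x}"

definition is_subfield :: "'a::field set \<Rightarrow> bool" where
  "is_subfield K \<longleftrightarrow> 0 \<in> K \<and> 1 \<in> K \<and> (\<forall>x\<in>K. \<forall>y\<in>K. x + y \<in> K \<and> x * y \<in> K)
     \<and> (\<forall>x\<in>K. - x \<in> K) \<and> (\<forall>x\<in>K. x \<noteq> 0 \<longrightarrow> inverse x \<in> K)"

definition field_automorphism :: "('a::field \<Rightarrow> 'a) \<Rightarrow> bool" where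
  "field_automorphism \<sigma> \<longleftrightarrow> bij \<sigma> \<and> \<sigma> 1 = 1 \<and>
     (\<forall>x y. \<sigma> (x + y) = \<sigma> x + \<sigma> y) \<and> (\<forall>x y. \<sigma> (x * y) = \<sigma> x * \<sigma> y)"

definition semilinear_over :: "'a::field set \<Rightarrow> ('a \<Rightarrow> 'a) \<Rightarrow> bool" where
  "semilinear_over K f \<longleftrightarrow>
     (\<exists>\<sigma>. field_automorphism \<sigma> \<and> (\<forall>\<alpha>\<in>K. \<forall>x. f (\<alpha> * x) = \<sigma> \<alpha> * f x))"

end

theory Submission
  imports Defs "HOL-Computational_Algebra.Polynomial" "HOL-Number_Theory.Cong"
begin

lemma fermat_gen:
  fixes x :: "'a::{finite,field}"
  shows "x ^ card (UNIV :: 'a set) = x"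
proof (cases "x = 0")
  case False
  have "x * (\<Prod>y\<in>UNIV-{0}. x * y) = x * x ^ (card (UNIV :: 'a set) - 1) * \<Prod>(UNIV-{0})"
    by (simp add: prod.distrib mult_ac)
  also have "x * x ^ (card (UNIV :: 'a set) - 1) = x ^ Suc (card (UNIV :: 'a set) - 1)"
    by (subst power_Suc) auto
  also have "Suc (card (UNIV :: 'a set) - 1) = card (UNIV :: 'a set)"
    using finite_UNIV_card_ge_0[where ?'a = 'a] by simp
  also have "(\<Prod>y\<in>UNIV-{0}. x * y) = (\<Prod>y\<in>UNIV-{0}. y)"
    by (rule prod.reindex_bij_witness[of _ "\<lambda>y. y / x" "\<lambda>y. x * y"]) (use False in auto)
  finally show ?thesis
    by simp
qed (use finite_UNIV_card_ge_0[where ?'a = 'a] in auto)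

lemma fix_iter:
  fixes x :: "'a::comm_monoid_mult"
  assumes "x ^ c = x"
  shows "x ^ (c ^ d) = x"
proof (induction d)
  case 0 then show ?case by simp
next
  case (Suc d)
  have "x ^ (c ^ Suc d) = (x ^ (c ^ d)) ^ c"
    by (simp add: power_mult[symmetric] mult.commute)
  then show ?case using Suc assms by simp
qed


lemma poly_lin:
  fixes c :: "nat \<Rightarrow> 'a::field"
  shows "poly (\<Sum>l\<in>A. Polynomial.monom (c l) (e l)) x = (\<Sum>l\<in>A. c l * x ^ e l)"
  by (simp add: poly_sum poly_monom)

lemma coeff_lin:
  "coeff (\<Sum>l\<in>A. Polynomial.monom (c l) (e l)) d = (\<Sum>l\<in>A. if e l = d then c l else 0)"
  by (simp add: coeff_sum Polynomial.coeff_monom)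

lemma lin_unique:
  fixes c :: "nat \<Rightarrow> 'a::{finite,field}"
  assumes card: "card (UNIV :: 'a set) = q ^ h" and q: "q \<ge> 2"
    and z: "\<And>x. (\<Sum>l<h. c l * x ^ (q ^ l)) = 0"
    and l: "l < h"
  shows "c l = 0"
proof -
  define P where "P = (\<Sum>l<h. Polynomial.monom (c l) (q ^ l))"
  have inj: "q ^ a = q ^ b \<longleftrightarrow> a = b" for a b using q by (simp add: power_inject_exp)
  have cP: "coeff P (q ^ m) = c m" if "m < h" for m
  proof -
    have "coeff P (q ^ m) = (\<Sum>l<h. if q ^ l = q ^ m then c l else 0)"
      unfolding P_def coeff_lin by simp
    also have "\<dots> = (\<Sum>l\<in>{m}. if q ^ l = q ^ m then c l else 0)"
      by (rule sum.mono_neutral_right) (use that inj in auto)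
    finally show ?thesis by simp
  qed
  have "degree P \<le> q ^ (h - 1)"
  proof (rule degree_le, intro allI impI)
    fix d assume d: "q ^ (h - 1) < d"
    have "coeff P d = (\<Sum>l<h. if q ^ l = d then c l else 0)"
      unfolding P_def coeff_lin by simp
    also have "\<dots> = 0"
    proof (rule sum.neutral, intro ballI)
      fix m assume "m \<in> {..<h}"
      then have "q ^ m \<le> q ^ (h - 1)" using q by (intro power_increasing) auto
      then show "(if q ^ m = d then c m else 0) = 0" using d by auto
    qed
    finally show "coeff P d = 0" .
  qed
  also have "q ^ (h - 1) < q ^ h" using q l by (intro power_strict_increasing) auto
  finally have deg: "degree P < q ^ h" .
  have "P = 0"
  proof (rule ccontr)
    assume "P \<noteq> 0"
    then have "card {x. poly P x = 0} \<le> degree P" by (rule card_poly_roots_bound)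
    moreover have "{x. poly P x = 0} = UNIV"
      using z unfolding P_def poly_lin by auto
    ultimately show False using deg card by simp
  qed
  then show ?thesis using cP[OF l] by simp
qed

lemma card_roots_T:
  fixes q s m :: nat
  assumes q: "q \<ge> 2" and s: "s \<ge> 1" and m: "m \<ge> 1"
  shows "card {x::'a::{finite,field}. (\<Sum>t<m. x ^ (q ^ (s * t))) = 0} \<le> q ^ (s * (m - 1))"
proof -
  define P :: "'a poly" where "P = (\<Sum>t<m. Polynomial.monom 1 (q ^ (s * t)))"
  have inj: "q ^ (s * a) = q ^ (s * b) \<longleftrightarrow> a = b" for a b using q s by (simp add: power_inject_exp)
  have "coeff P (q ^ (s * (m - 1))) = (\<Sum>t<m. if q ^ (s * t) = q ^ (s * (m - 1)) then 1 else 0)"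
    unfolding P_def coeff_lin by simp
  also have "\<dots> = (\<Sum>t\<in>{m - 1}. if q ^ (s * t) = q ^ (s * (m - 1)) then 1 else 0)"
    by (rule sum.mono_neutral_right) (use m inj in auto)
  finally have c1: "coeff P (q ^ (s * (m - 1))) = 1" by simp
  then have P0: "P \<noteq> 0" by auto
  have "degree P \<le> q ^ (s * (m - 1))"
  proof (rule degree_le, intro allI impI)
    fix d assume d: "q ^ (s * (m - 1)) < d"
    have "coeff P d = (\<Sum>t<m. if q ^ (s * t) = d then 1 else 0)"
      unfolding P_def coeff_lin by simp
    also have "\<dots> = 0"
    proof (rule sum.neutral, intro ballI)
      fix t assume "t \<in> {..<m}"
      then have "q ^ (s * t) \<le> q ^ (s * (m - 1))" using q by (intro power_increasing) auto
      then show "(if q ^ (s * t) = d then 1 else 0) = (0::'a)" using d by auto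
    qed
    finally show "coeff P d = 0" .
  qed
  moreover have "{x. poly P x = 0} = {x::'a. (\<Sum>t<m. x ^ (q ^ (s * t))) = 0}"
    unfolding P_def poly_lin by simp
  ultimately show ?thesis using card_poly_roots_bound[OF P0] by simp
qed

lemma card_Fq:
  assumes q: "q \<ge> 2"
  shows "card (Fq q :: 'a::{finite,field} set) \<le> q"
proof -
  define P :: "'a poly" where "P = Polynomial.monom 1 q - Polynomial.monom 1 1"
  have c: "coeff P q = 1" using q by (simp add: P_def Polynomial.coeff_monom)
  then have P0: "P \<noteq> 0" by auto
  have "degree P \<le> q"
    by (rule degree_le) (use q in \<open>auto simp: P_def Polynomial.coeff_monom\<close>)
  moreover have "{x. poly P x = 0} = (Fq q :: 'a set)"
    by (auto simp: P_def Fq_def poly_monom)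
  ultimately show ?thesis using card_poly_roots_bound[OF P0] by simp
qed

lemma rank_nullity_card:
  fixes T :: "'a::{finite,ab_group_add} \<Rightarrow> 'b"
  assumes add: "\<And>x y. T x = T y \<Longrightarrow> T (x - y) = T 0"
  shows "card (UNIV :: 'a set) \<le> card (range T) * card {x. T x = T 0}"
proof -
  have "UNIV = (\<Union>y\<in>range T. {x. T x = y})" by auto
  then have "card (UNIV :: 'a set) = card (\<Union>y\<in>range T. {x. T x = y})" by simp
  also have "\<dots> \<le> (\<Sum>y\<in>range T. card {x. T x = y})" by (rule card_UN_le) simp
  also have "\<dots> \<le> (\<Sum>y\<in>range T. card {x. T x = T 0})"
  proof (rule sum_mono)
    fix y assume "y \<in> range T"
    then obtain x0 where x0: "y = T x0" by auto
    have "{x. T x = y} \<subseteq> (\<lambda>z. z + x0) ` {x. T x = T 0}"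
    proof
      fix x assume "x \<in> {x. T x = y}"
      then have "T (x - x0) = T 0" using add x0 by auto
      then show "x \<in> (\<lambda>z. z + x0) ` {x. T x = T 0}" by (intro image_eqI[of _ _ "x - x0"]) auto
    qed
    then have "card {x. T x = y} \<le> card ((\<lambda>z. z + x0) ` {x. T x = T 0})"
      by (intro card_mono) auto
    also have "\<dots> \<le> card {x. T x = T 0}" by (rule card_image_le) auto
    finally show "card {x. T x = y} \<le> card {x. T x = T 0}" .
  qed
  also have "\<dots> = card (range T) * card {x. T x = T 0}" by simp
  finally show ?thesis .
qed


lemma of_nat_card_zero: "of_nat (card (UNIV :: 'a::{finite,field} set)) = (0::'a)"
proof -
  have "(\<Sum>x\<in>(UNIV::'a set). x + 1) = (\<Sum>x\<in>UNIV. x)"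
    by (rule sum.reindex_bij_witness[of _ "\<lambda>y. y - 1" "\<lambda>y. y + 1"]) auto
  then show ?thesis by (simp add: sum.distrib)
qed

lemma char_is_p:
  assumes "prime p" "card (UNIV :: 'a::{finite,field} set) = p ^ N" "N > 0"
  shows "CHAR('a) = p"
proof -
  have pc: "prime CHAR('a)"
    using prime_CHAR_semidom finite_imp_CHAR_pos[where ?'a='a] by auto
  have "CHAR('a) dvd card (UNIV :: 'a set)" using of_nat_card_zero[where 'a='a]
    by (simp only: of_nat_eq_0_iff_char_dvd)
  then have "CHAR('a) dvd p ^ N" using assms(2) by simp
  then have "CHAR('a) dvd p" using pc prime_dvd_power by blast
  then show ?thesis using pc assms(1) primes_dvd_imp_eq by blast
qed


lemma mod_back:
  fixes l c h :: nat
  assumes "l < h" "c < h"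
  shows "((l + c) mod h + (h - c)) mod h = l"
proof -
  have "((l + c) mod h + (h - c)) mod h = (l + c + (h - c)) mod h" by (simp add: mod_add_left_eq)
  also have "l + c + (h - c) = l + h" using assms by simp
  finally show ?thesis using assms by simp
qed

lemma mod_fwd:
  fixes m c h :: nat
  assumes "m < h" "c < h"
  shows "((m + (h - c)) mod h + c) mod h = m"
proof -
  have "((m + (h - c)) mod h + c) mod h = (m + (h - c) + c) mod h" by (simp add: mod_add_left_eq)
  also have "m + (h - c) + c = m + h" using assms by simp
  finally show ?thesis using assms by simp
qed

lemma mod_back':
  fixes l c h :: nat
  assumes "l < h" "c < h"
  shows "((l + c) mod h + h - c) mod h = l"
  using mod_back[OF assms] assms by (simp add: Nat.add_diff_assoc less_imp_le)

lemma mod_fwd':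
  fixes m c h :: nat
  assumes "m < h" "c < h"
  shows "((m + h - c) mod h + c) mod h = m"
  using mod_fwd[OF assms] assms by (simp add: Nat.add_diff_assoc less_imp_le)

theorem lemma5p14:
  fixes q h :: nat and f fbar :: "nat \<Rightarrow> 'a::{finite,field}"
  assumes q_pp: "\<exists>p n. prime p \<and> n > 0 \<and> q = p ^ n"
    and card_field: "card (UNIV :: 'a set) = q ^ h"
    and invertible: "bij (lin_poly q h f)"
    and two_coeffs: "card {i. i < h \<and> f i \<noteq> 0} = 2"
    and not_semilinear: "\<forall>K. is_subfield K \<and> Fq q \<subset> K \<longrightarrow> \<not> semilinear_over K (lin_poly q h f)"
    and inverse: "\<forall>x. lin_poly q h fbar x = inv (lin_poly q h f) x"
  shows "\<forall>i<h. fbar i \<noteq> 0"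
proof -
  obtain p n where pn: "prime p" "n > 0" "q = p ^ n" using q_pp by auto
  have "p \<le> p ^ n" using pn prime_gt_0_nat[of p] by (cases n) auto
  then have q2: "q \<ge> 2" using pn prime_ge_2_nat[of p] by simp
  have qpos: "q ^ l > 0" for l using q2 by simp
  have q0: "q > 0" using q2 by simp
  have zpow: "(0::'a) ^ (q ^ l) = 0" for l using zero_power[OF qpos] .
  define S where "S = {i. i < h \<and> f i \<noteq> 0}"
  have "S \<subseteq> {..<h}" by (auto simp: S_def)
  then have "card S \<le> h" using card_mono[of "{..<h}" S] by simp
  then have h2: "h \<ge> 2" using two_coeffs by (simp add: S_def)
  obtain i0 j0 where S2: "S = {i0, j0}" "i0 \<noteq> j0" using two_coeffs card_2_iff[of S] by (auto simp: S_def)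
  obtain i j where ij: "i < j" "j < h" "f i \<noteq> 0" "f j \<noteq> 0" and Sij: "S = {i, j}"
  proof (cases "i0 < j0")
    case True then show ?thesis using that[of i0 j0] S2 by (auto simp: S_def)
  next
    case False then show ?thesis using that[of j0 i0] S2 by (auto simp: S_def)
  qed
  have ih: "i < h" using ij by simp
  have Char: "CHAR('a) = p"
    by (rule char_is_p[where N="n * h"]) (use pn card_field h2 in \<open>auto simp: power_mult\<close>)
  have pc: "prime CHAR('a)" using Char pn by simp
  have frob: "(x + y) ^ (q ^ l) = x ^ (q ^ l) + y ^ (q ^ l)" for x y :: 'a and l
    by (rule freshmans_dream'[where n="n*l"]) (simp_all add: Char pn power_mult)
  have frobsum: "(sum g A) ^ (q ^ l) = (\<Sum>a\<in>A. g a ^ (q ^ l))" for g :: "nat \<Rightarrow> 'a" and A l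
    by (rule freshmans_dream_sum'[where n="n*l"]) (simp_all add: Char pn power_mult)
  have frobdiff: "(x - y) ^ (q ^ l) = x ^ (q ^ l) - y ^ (q ^ l)" for x y :: 'a and l
    using frob[of "x - y" y l] by (simp add: algebra_simps)
  have Fdef: "lin_poly q h f x = f i * x ^ (q ^ i) + f j * x ^ (q ^ j)" for x
  proof -
    have "lin_poly q h f x = (\<Sum>l\<in>{i, j}. f l * x ^ (q ^ l))"
      unfolding lin_poly_def
      by (rule sum.mono_neutral_right) (use ij Sij in \<open>auto simp: S_def\<close>)
    then show ?thesis using ij by simp
  qed
  have ferm: "x ^ (q ^ h) = x" for x :: 'a using fermat_gen[of x] card_field by simp
  have modpow: "x ^ (q ^ N) = x ^ (q ^ (N mod h))" for x :: 'a and N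
  proof -
    have "q ^ N = q ^ (h * (N div h) + N mod h)" by simp
    also have "\<dots> = (q ^ h) ^ (N div h) * q ^ (N mod h)" by (simp only: power_add power_mult)
    finally have "q ^ N = (q ^ h) ^ (N div h) * q ^ (N mod h)" .
    then have "x ^ (q ^ N) = (x ^ ((q ^ h) ^ (N div h))) ^ (q ^ (N mod h))"
      by (simp add: power_mult)
    also have "x ^ ((q ^ h) ^ (N div h)) = x" by (rule fix_iter) (rule ferm)
    finally show ?thesis .
  qed
  define k where "k = j - i"
  define k' where "k' = h - k"
  have kk: "k > 0" "k < h" "k' > 0" "k' < h" "j = i + k" using ij by (auto simp: k_def k'_def)
  have cop: "coprime k' h"
  proof (rule ccontr)
    assume nc: "\<not> coprime k' h"
    define s where "s = gcd k' h"
    have "s \<noteq> 1" using nc by (simp add: s_def coprime_iff_gcd_eq_1)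
    moreover have "s > 0" using h2 by (simp add: s_def)
    ultimately have s2: "s \<ge> 2" by simp
    have "s dvd k'" "s dvd h" by (simp_all add: s_def)
    then have sk: "s dvd k" using kk dvd_diff_nat[of s h k'] by (simp add: k'_def)
    obtain m where hm: "h = s * m" using \<open>s dvd h\<close> by (auto elim: dvdE)
    have m1: "m \<ge> 1" using hm h2 by (cases m) auto
    define K where "K = {x::'a. x ^ (q ^ s) = x}"
    have Kpow: "x ^ (q ^ (s * t)) = x" if "x \<in> K" for x t
      using fix_iter[of x "q ^ s" t] that by (simp add: K_def power_mult)
    have neg: "(- x) ^ (q ^ l) = - (x ^ (q ^ l))" for x :: 'a and l
    proof -
      have "(-x + x) ^ (q ^ l) = (-x) ^ (q ^ l) + x ^ (q ^ l)" by (rule frob)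
      then have "(-x) ^ (q ^ l) + x ^ (q ^ l) = 0" by (simp only: add.left_inverse zpow)
      then show ?thesis by (simp add: eq_neg_iff_add_eq_0)
    qed
    have subK: "is_subfield K"
      unfolding is_subfield_def K_def
      by (auto simp: zpow frob power_mult_distrib neg power_inverse)
    have FqK: "Fq q \<subseteq> K"
      unfolding Fq_def K_def using fix_iter by blast
    define T where "T x = (\<Sum>t<m. x ^ (q ^ (s * t)))" for x :: 'a
    have T0: "T 0 = 0" unfolding T_def by (simp add: zpow)
    have Tadd: "T (x - y) = T 0" if "T x = T y" for x y
      using that unfolding T_def by (simp add: frobdiff sum_subtractf T0[unfolded T_def])
    have rn: "q ^ h \<le> card (range T) * card {x. T x = T 0}"
      using rank_nullity_card[of T] Tadd card_field by simp
    have ker: "card {x. T x = T 0} \<le> q ^ (s * (m - 1))"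
      using card_roots_T[OF q2 _ m1, of s, where 'a='a] s2 T0 unfolding T_def by simp
    have rK: "range T \<subseteq> K"
    proof
      fix y assume "y \<in> range T"
      then obtain x where x: "y = T x" by auto
      obtain m' where m': "m = Suc m'" using m1 by (cases m) auto
      have "T x ^ (q ^ s) = (\<Sum>t<m. x ^ (q ^ (s * Suc t)))"
        unfolding T_def frobsum
        by (simp add: power_mult[symmetric] power_add[symmetric] mult.commute)
      also have "\<dots> = (\<Sum>t<m'. x ^ (q ^ (s * Suc t))) + x ^ (q ^ h)"
        using m' hm by simp
      also have "\<dots> = T x"
        unfolding T_def m' sum.lessThan_Suc_shift ferm by simp
      finally show "y \<in> K" using x by (simp add: K_def)
    qed
    have "card (range T) \<le> card K" using rK by (intro card_mono) auto
    moreover have "q ^ s * q ^ (s * (m - 1)) \<le> card (range T) * q ^ (s * (m - 1))"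
    proof -
      have "q ^ s * q ^ (s * (m - 1)) = q ^ h"
        using hm m1 by (simp add: power_add[symmetric] algebra_simps)
      also have "\<dots> \<le> card (range T) * q ^ (s * (m - 1))"
        using rn ker mult_le_mono2 order_trans by blast
      finally show ?thesis .
    qed
    ultimately have cK: "q ^ s \<le> card K" using q0 by (auto intro: le_trans)
    have "q ^ 1 < q ^ s" using q2 s2 by (intro power_strict_increasing) auto
    then have "card (Fq q :: 'a set) < card K" using card_Fq[OF q2, where 'a='a] cK by simp
    then have "Fq q \<noteq> K" by auto
    then have sub: "Fq q \<subset> K" using FqK by auto
    define \<sigma> where "\<sigma> x = x ^ (q ^ i)" for x :: 'a
    have "inj \<sigma>"
    proof (rule injI)
      fix x y assume "\<sigma> x = \<sigma> y"
      then have "(x - y) ^ (q ^ i) = 0" by (simp add: \<sigma>_def frobdiff)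
      then show "x = y" by simp
    qed
    then have "bij \<sigma>" using finite_UNIV_inj_surj[of \<sigma>] by (simp add: bij_def)
    then have aut: "field_automorphism \<sigma>"
      unfolding field_automorphism_def by (simp add: \<sigma>_def frob power_mult_distrib)
    have "semilinear_over K (lin_poly q h f)"
      unfolding semilinear_over_def
    proof (intro exI conjI ballI allI)
      show "field_automorphism \<sigma>" by (rule aut)
      fix \<alpha> x assume a: "\<alpha> \<in> K"
      obtain t where t: "k = s * t" using sk by (auto elim: dvdE)
      have "\<alpha> ^ (q ^ j) = (\<alpha> ^ (q ^ k)) ^ (q ^ i)"
        by (simp add: kk power_add power_mult[symmetric] mult.commute)
      also have "\<alpha> ^ (q ^ k) = \<alpha>" using Kpow[OF a, of t] t by simp
      finally have "\<alpha> ^ (q ^ j) = \<alpha> ^ (q ^ i)" .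
      then show "lin_poly q h f (\<alpha> * x) = \<sigma> \<alpha> * lin_poly q h f x"
        unfolding Fdef \<sigma>_def by (simp add: power_mult_distrib algebra_simps)
    qed
    then show False using not_semilinear subK sub by blast
  qed
  have invF: "lin_poly q h f (lin_poly q h fbar x) = x" for x
    using inverse invertible by (simp add: bij_is_surj surj_f_inv_f)
  define FB where "FB x = (\<Sum>l<h. fbar l * x ^ (q ^ l))" for x :: 'a
  have FBeq: "lin_poly q h fbar x = FB x" for x by (simp add: lin_poly_def FB_def)
  have powsum: "(FB x) ^ (q ^ c) = (\<Sum>l<h. fbar l ^ (q ^ c) * x ^ (q ^ ((l + c) mod h)))" for x c
  proof -
    have "(FB x) ^ (q ^ c) = (\<Sum>l<h. fbar l ^ (q ^ c) * x ^ (q ^ (l + c)))"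
      unfolding FB_def frobsum
      by (simp add: power_mult_distrib power_mult[symmetric] power_add)
    also have "\<dots> = (\<Sum>l<h. fbar l ^ (q ^ c) * x ^ (q ^ ((l + c) mod h)))"
      using modpow by simp
    finally show ?thesis .
  qed
  have reidx: "(\<Sum>l<h. G l * x ^ (q ^ ((l + c) mod h))) = (\<Sum>m<h. G ((m + (h - c)) mod h) * x ^ (q ^ m))"
    if "c < h" for G :: "nat \<Rightarrow> 'a" and x c
    by (rule sum.reindex_bij_witness[of _ "\<lambda>m. (m + (h - c)) mod h" "\<lambda>l. (l + c) mod h"])
       (use that q0 in \<open>auto simp: mod_back' mod_fwd'\<close>)
  define c where "c m = f i * fbar ((m + (h - i)) mod h) ^ (q ^ i) + f j * fbar ((m + (h - j)) mod h) ^ (q ^ j)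
     - (if m = 0 then 1 else 0)" for m
  have c0: "c m = 0" if "m < h" for m
  proof (rule lin_unique[OF card_field q2 _ that])
    fix x :: 'a
    have "(\<Sum>m<h. (if m = 0 then 1 else 0) * x ^ (q ^ m)) = x"
    proof -
      have "(\<Sum>m<h. (if m = 0 then 1 else 0) * x ^ (q ^ m)) = (\<Sum>m<h. if m = 0 then x ^ (q ^ m) else 0)"
        by (rule sum.cong) auto
      also have "\<dots> = x" using h2 by (simp add: sum.delta)
      finally show ?thesis .
    qed
    moreover have "(\<Sum>m<h. (f i * fbar ((m + (h - i)) mod h) ^ (q ^ i) + f j * fbar ((m + (h - j)) mod h) ^ (q ^ j)) * x ^ (q ^ m))
       = f i * (FB x) ^ (q ^ i) + f j * (FB x) ^ (q ^ j)"
      unfolding powsum reidx[OF ih] reidx[OF ij(2)]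
      using ij by (simp add: algebra_simps sum.distrib sum_distrib_left)
    moreover have "f i * (FB x) ^ (q ^ i) + f j * (FB x) ^ (q ^ j) = x"
      using invF[of x] unfolding Fdef FBeq .
    ultimately show "(\<Sum>m<h. c m * x ^ (q ^ m)) = 0"
      unfolding c_def by (simp add: algebra_simps sum_subtractf)
  qed
  define r where "r = (h - i) mod h"
  have rh: "r < h" using h2 by (simp add: r_def)
  have step: "fbar t = 0 \<longleftrightarrow> fbar ((t + k') mod h) = 0" if t: "t < h" "t \<noteq> r" for t
  proof -
    define m where "m = (t + i) mod h"
    have mh: "m < h" using h2 by (simp add: m_def)
    have m0: "m \<noteq> 0"
    proof
      assume "m = 0"
      then have "(m + (h - i)) mod h = (h - i) mod h" by simp
      moreover have "(m + (h - i)) mod h = t" unfolding m_def by (rule mod_back[OF t(1) ih])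
      ultimately show False using t(2) by (simp add: r_def)
    qed
    have e1: "(m + (h - i)) mod h = t" unfolding m_def by (rule mod_back[OF t(1) ih])
    have "(m + (h - j)) mod h = (t + i + (h - j)) mod h" unfolding m_def by (simp add: mod_add_left_eq)
    also have "t + i + (h - j) = t + k'" using ij by (simp add: k'_def k_def)
    finally have e2: "(m + (h - j)) mod h = (t + k') mod h" .
    have "c m = 0" by (rule c0[OF mh])
    then have eq: "f i * fbar t ^ (q ^ i) + f j * fbar ((t + k') mod h) ^ (q ^ j) = 0"
      unfolding c_def e1 e2 using m0 by simp
    show ?thesis
    proof
      assume "fbar t = 0"
      then have "f j * fbar ((t + k') mod h) ^ (q ^ j) = 0" using eq zpow[of i] by simp
      then show "fbar ((t + k') mod h) = 0" using ij by simp
    next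
      assume "fbar ((t + k') mod h) = 0"
      then have "f i * fbar t ^ (q ^ i) = 0" using eq zpow[of j] by simp
      then show "fbar t = 0" using ij by simp
    qed
  qed
  show ?thesis
  proof (rule ccontr)
    assume "\<not> (\<forall>i<h. fbar i \<noteq> 0)"
    then obtain t0 where t0: "t0 < h" "fbar t0 = 0" by auto
    define w where "w n = (r + n * k') mod h" for n
    have wcong: "a = b" if "a < h" "b < h" "w a = w b" for a b
    proof -
      have "[r + a * k' = r + b * k'] (mod h)" using that(3) by (simp add: w_def cong_def)
      then have "[a * k' = b * k'] (mod h)" by (simp add: cong_add_lcancel_nat)
      then have "[a = b] (mod h)" using cong_mult_rcancel_nat[OF cop] by simp
      then show ?thesis using cong_less_modulus_unique_nat that by blast
    qed
    have winj: "inj_on w {..<h}" by (rule inj_onI) (use wcong in auto)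
    have wlt: "w n < h" for n using h2 by (simp add: w_def)
    have wsurj: "w ` {..<h} = {..<h}"
      by (rule card_subset_eq) (use winj wlt in \<open>auto simp: card_image\<close>)
    have wsuc: "w (Suc n) = (w n + k') mod h" for n
    proof -
      have "w (Suc n) = (r + n * k' + k') mod h" by (simp add: w_def algebra_simps)
      also have "\<dots> = (w n + k') mod h" unfolding w_def by (simp add: mod_add_left_eq)
      finally show ?thesis .
    qed
    have wr: "w n \<noteq> r" if "0 < n" "n < h" for n
    proof
      assume "w n = r"
      then have "w n = w 0" by (simp add: w_def r_def)
      then show False using wcong[of n 0] that by simp
    qed
    have chain: "1 \<le> n \<Longrightarrow> n < h \<Longrightarrow> (fbar (w n) = 0 \<longleftrightarrow> fbar (w 1) = 0)" for n
    proof (induction n)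
      case 0 then show ?case by simp
    next
      case (Suc n)
      show ?case
      proof (cases "n = 0")
        case True then show ?thesis by simp
      next
        case False
        then have "fbar (w n) = 0 \<longleftrightarrow> fbar (w 1) = 0" using Suc by simp
        moreover have "fbar (w n) = 0 \<longleftrightarrow> fbar (w (Suc n)) = 0"
          unfolding wsuc by (rule step[OF wlt wr]) (use False Suc in auto)
        ultimately show ?thesis by simp
      qed
    qed
    have wh: "w h = w 0" by (simp add: w_def)
    have "fbar (w (h - 1)) = 0 \<longleftrightarrow> fbar (w (Suc (h - 1))) = 0"
      unfolding wsuc by (rule step[OF wlt wr]) (use h2 in auto)
    then have w0: "fbar (w 0) = 0 \<longleftrightarrow> fbar (w 1) = 0"
      using chain[of "h - 1"] h2 wh by simp
    have all: "fbar (w n) = 0 \<longleftrightarrow> fbar (w 1) = 0" if "n < h" for n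
      using chain[of n] w0 that by (cases n) auto
    have "t0 \<in> w ` {..<h}" using wsurj t0(1) by simp
    then obtain n0 where n0: "n0 < h" "w n0 = t0" by auto
    have "fbar (w 1) = 0" using all[OF n0(1)] n0 t0 by simp
    then have z: "fbar l = 0" if "l < h" for l
    proof -
      have "l \<in> w ` {..<h}" using wsurj that by simp
      then obtain n1 where "n1 < h" "w n1 = l" by auto
      then show ?thesis using all[of n1] \<open>fbar (w 1) = 0\<close> by simp
    qed
    have "FB 1 = 0" unfolding FB_def using z by simp
    then have "lin_poly q h f 0 = 1" using invF[of 1] FBeq[of 1] by simp
    moreover have "lin_poly q h f 0 = 0" unfolding Fdef by (simp add: zpow)
    ultimately show False by simp
  qed
qed

end
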